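(* Let $k\ge3$ and let $D\subseteq\mathbb{D}$ be an open set with the $k$-th Hindmarsh property. If $\mathcal{Z}\subset D$ is a discrete set in $D$, then $D\setminus\mathcal{Z}$ also has the $k$-th Hindmarsh property.
   Context: $\mathbb{D}$ is the open unit disk. A set $\mathcal{Z}\subset D$ is discrete in $D$ if it is at most countable with no accumulation points in $D$. A Schur function is an analytic $S:\mathbb{D}\to\mathbb{C}$ with $|S|\le1$. Pick matrix: $P_k(f;z_1,\dots,z_k)=\left[\frac{1-f(z_i)\overline{f(z_j)}}{1-z_i\overline{z_j}}\right]_{i,j=1}^k$. For an integer $k\ge3$, an open set $D\subseteq\mathbb{D}$ has the $k$-th Hindmarsh property if every function $f:D\to\mathbb{C}$ such that $P_k(f;z_1,\dots,z_k)$ is positive semidefinite for every choice of distinct $z_1,\dots,z_k\in D$ admits an extension to a Schur function on $\mathbb{D}$. Hindmarsh's theorem (may be assumed): if $U\subseteq\mathbb{D}$ is open and $f:U\to\mathbb{C}$ has $P_3(f;z_1,z_2,z_3)\ge0$ for all $z_1,z_2,z_3\in U$, then $f$ is analytic on $U$ with $|f|\le1$. *)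

theory Defs
  imports "HOL-Analysis.Analysis"
begin

definition pick_entry :: "(complex \<Rightarrow> complex) \<Rightarrow> (nat \<Rightarrow> complex) \<Rightarrow> nat \<Rightarrow> nat \<Rightarrow> complex" where
  "pick_entry f z i j = (1 - f (z i) * cnj (f (z j))) / (1 - z i * cnj (z j))"

definition psd_matrix :: "nat \<Rightarrow> (nat \<Rightarrow> nat \<Rightarrow> complex) \<Rightarrow> bool" where
  "psd_matrix k M \<longleftrightarrow>
     (\<forall>i<k. \<forall>j<k. M j i = cnj (M i j)) \<and>
     (\<forall>c :: nat \<Rightarrow> complex. 0 \<le> (\<Sum>i<k. \<Sum>j<k. cnj (c i) * M i j * c j))"

definition schur_function :: "(complex \<Rightarrow> complex) \<Rightarrow> bool" where
  "schur_function S \<longleftrightarrow> S holomorphic_on ball 0 1 \<and> (\<forall>z\<in>ball 0 1. norm (S z) \<le> 1)"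

definition hindmarsh_property :: "nat \<Rightarrow> complex set \<Rightarrow> bool" where
  "hindmarsh_property k D \<longleftrightarrow>
     (\<forall>f :: complex \<Rightarrow> complex.
        (\<forall>z :: nat \<Rightarrow> complex. inj_on z {..<k} \<and> z ` {..<k} \<subseteq> D \<longrightarrow>
            psd_matrix k (pick_entry f z))
        \<longrightarrow> (\<exists>S. schur_function S \<and> (\<forall>w\<in>D. S w = f w)))"

definition discrete_in :: "complex set \<Rightarrow> complex set \<Rightarrow> bool" where
  "discrete_in Z D \<longleftrightarrow> countable Z \<and> (\<forall>w\<in>D. \<not> (w islimpt Z))"

end

theory Submission
  imports Defs "HOL-Real_Asymp.Real_Asymp"
begin

lemma approx_seq:
  fixes f :: "complex \<Rightarrow> complex"
  assumes "open D" "z \<in> D" "\<not> z islimpt Z" "\<forall>x\<in>D-Z. norm (f x) \<le> 1"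
  shows "\<exists>v L. (\<forall>n. v n \<in> D - Z) \<and> v \<longlonglongrightarrow> z \<and> (\<lambda>n. f (v n)) \<longlonglongrightarrow> L"
proof -
  obtain T where T: "open T" "z \<in> T" "\<And>y. y \<in> Z \<Longrightarrow> y \<in> T \<Longrightarrow> y = z"
    using assms(3) unfolding islimpt_def by blast
  have "open (D \<inter> T)" using T assms by blast
  then obtain e where e: "e > 0" "ball z e \<subseteq> D \<inter> T"
    using T assms(2) by (meson IntI openE)
  define w where "w n = z + complex_of_real (e / (real n + 2))" for n
  have wD: "w n \<in> D - Z" for n
  proof -
    have pos: "e / (real n + 2) > 0" using e by simp
    have lt: "e / (real n + 2) < e" using e by (simp add: divide_less_eq)
    have "dist z (w n) = \<bar>e / (real n + 2)\<bar>" unfolding w_def dist_norm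
      by (metis add_diff_cancel_left' norm_minus_commute norm_of_real)
    hence "dist z (w n) < e" using pos lt by simp
    hence "w n \<in> D \<inter> T" using e by auto
    moreover have "w n \<noteq> z" using pos unfolding w_def
      by (metis add_cancel_right_right of_real_eq_0_iff less_irrefl)
    ultimately show ?thesis using T by auto
  qed
  have lim0: "(\<lambda>n. e / (real n + 2)) \<longlonglongrightarrow> 0" by real_asymp
  have "(\<lambda>n. complex_of_real (e / (real n + 2))) \<longlonglongrightarrow> 0"
    using tendsto_of_real[OF lim0] by (simp del: of_real_divide)
  hence wlim: "w \<longlonglongrightarrow> z" unfolding w_def using tendsto_add[of "\<lambda>_. z" z sequentially] by fastforce
  have "\<forall>n. (f \<circ> w) n \<in> cball 0 1" using wD assms(4) by auto
  then obtain l r where r: "strict_mono r" "((f \<circ> w) \<circ> r) \<longlonglongrightarrow> l"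
    using compact_cball[of "0::complex" 1] unfolding compact_eq_seq_compact_metric seq_compact_def
    by blast
  have "(w \<circ> r) \<longlonglongrightarrow> z" using LIMSEQ_subseq_LIMSEQ[OF wlim r(1)] .
  moreover have "\<forall>n. (w \<circ> r) n \<in> D - Z" using wD by auto
  moreover have "(\<lambda>n. f ((w \<circ> r) n)) \<longlonglongrightarrow> l" using r(2) by (simp add: o_def)
  ultimately show ?thesis by blast
qed

lemma pick_sym: "pick_entry F z j i = cnj (pick_entry F z i j)"
  unfolding pick_entry_def by (simp add: ac_simps)

theorem proposition6p1:
  fixes k :: nat and D Z :: "complex set"
  assumes "k \<ge> 3"
    and "open D" and "D \<subseteq> ball 0 1"
    and "hindmarsh_property k D"
    and "Z \<subseteq> D" and "discrete_in Z D"
  shows "hindmarsh_property k (D - Z)"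
  unfolding hindmarsh_property_def
proof (intro allI impI)
  fix f :: "complex \<Rightarrow> complex"
  assume H: "\<forall>z. inj_on z {..<k} \<and> z ` {..<k} \<subseteq> D - Z \<longrightarrow> psd_matrix k (pick_entry f z)"
  have nolim: "\<forall>w\<in>D. \<not> w islimpt Z" using assms(6) by (simp add: discrete_in_def)
  have openDZ: "open (D - Z)"
  proof -
    have "open (D - closure Z)" using assms(2) by blast
    moreover have "D - closure Z = D - Z"
      using nolim by (auto simp: closure_def)
    ultimately show ?thesis by simp
  qed
  have bnd: "\<forall>x\<in>D-Z. norm (f x) \<le> 1"
  proof
    fix x assume x: "x \<in> D - Z"
    obtain r where r: "r > 0" "ball x r \<subseteq> D - Z" using openDZ x openE by blast
    define z where "z i = x + complex_of_real (r/2 * real i / real k)" for i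
    have inj: "inj_on z {..<k}"
      using r assms(1) by (auto simp: inj_on_def z_def)
    have img: "z ` {..<k} \<subseteq> D - Z"
    proof
      fix y assume "y \<in> z ` {..<k}"
      then obtain i where i: "i < k" "y = z i" by auto
      have "r/2 * real i / real k \<le> r/2" using i r by (simp add: divide_le_eq)
      moreover have "0 \<le> r/2 * real i / real k" using r by simp
      moreover have "dist x y = \<bar>r/2 * real i / real k\<bar>" unfolding i z_def dist_norm
        by (metis add_diff_cancel_left' norm_minus_commute norm_of_real)
      ultimately have "dist x y < r" using r by simp
      thus "y \<in> D - Z" using r by auto
    qed
    have "psd_matrix k (pick_entry f z)" using H inj img by blast
    define c0 :: "nat \<Rightarrow> complex" where "c0 i = (if i = 0 then 1 else 0)" for i
    have "0 \<le> (\<Sum>i<k. \<Sum>j<k. cnj (c0 i) * pick_entry f z i j * c0 j)"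
      using \<open>psd_matrix k (pick_entry f z)\<close> unfolding psd_matrix_def by blast
    also have "\<dots> = pick_entry f z 0 0"
    proof -
      have "(\<Sum>j<k. cnj (c0 i) * pick_entry f z i j * c0 j) = cnj (c0 i) * pick_entry f z i 0" for i
        using assms(1) by (simp add: c0_def if_distrib[of "\<lambda>x. _ * x"] sum.delta cong: if_cong)
      moreover have "(\<Sum>i<k. cnj (c0 i) * pick_entry f z i 0) = pick_entry f z 0 0"
        using assms(1) by (simp add: c0_def if_distrib[of "\<lambda>x. cnj x * _"] sum.delta cong: if_cong)
      ultimately show ?thesis by simp
    qed
    finally have P: "0 \<le> pick_entry f z 0 0" .
    have z0: "z 0 = x" by (simp add: z_def)
    have xn: "norm x < 1" using x assms(3) by auto
    have "pick_entry f z 0 0 = complex_of_real ((1 - (norm (f x))^2) / (1 - (norm x)^2))"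
      by (simp add: pick_entry_def z0 complex_norm_square[symmetric])
    with P have "0 \<le> complex_of_real ((1 - (norm (f x))^2) / (1 - (norm x)^2))" by (simp only:)
    hence "0 \<le> (1 - (norm (f x))^2) / (1 - (norm x)^2)" unfolding less_eq_complex_def by simp
    moreover have "1 - (norm x)^2 > 0" using xn by (simp add: power_less_one_iff abs_square_less_1)
    ultimately have "(norm (f x))^2 \<le> 1" by (simp add: zero_le_divide_iff)
    thus "norm (f x) \<le> 1" by (simp add: power_le_one_iff abs_square_le_1)
  qed
  have "\<forall>z\<in>Z. \<exists>v L. (\<forall>n. v n \<in> D - Z) \<and> v \<longlonglongrightarrow> z \<and> (\<lambda>n. f (v n)) \<longlonglongrightarrow> L"
    using approx_seq[OF assms(2) _ _ bnd] nolim assms(5) by blast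
  then obtain V LL where VL: "\<And>z. z \<in> Z \<Longrightarrow> (\<forall>n. V z n \<in> D - Z) \<and> V z \<longlonglongrightarrow> z \<and> (\<lambda>n. f (V z n)) \<longlonglongrightarrow> LL z"
    by metis
  define F where "F y = (if y \<in> Z then LL y else f y)" for y
  have "psd_matrix k (pick_entry F z)" if zi: "inj_on z {..<k}" "z ` {..<k} \<subseteq> D" for z
  proof -
    define t where "t n i = (if z i \<in> Z then V (z i) n else z i)" for n i
    have tlim: "(\<lambda>n. t n i) \<longlonglongrightarrow> z i" for i
      using VL by (cases "z i \<in> Z") (auto simp: t_def)
    have flim: "(\<lambda>n. f (t n i)) \<longlonglongrightarrow> F (z i)" for i
      using VL by (cases "z i \<in> Z") (auto simp: t_def F_def)
    have timg: "t n ` {..<k} \<subseteq> D - Z" for n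
      using VL zi by (auto simp: t_def)
    have ev: "eventually (\<lambda>n. \<forall>p\<in>{..<k}\<times>{..<k}. fst p \<noteq> snd p \<longrightarrow> t n (fst p) \<noteq> t n (snd p)) sequentially"
    proof (rule eventually_ball_finite)
      show "finite ({..<k}\<times>{..<k})" by simp
      show "\<forall>p\<in>{..<k}\<times>{..<k}. eventually (\<lambda>n. fst p \<noteq> snd p \<longrightarrow> t n (fst p) \<noteq> t n (snd p)) sequentially"
      proof
        fix p assume p: "p \<in> {..<k}\<times>{..<k}"
        show "eventually (\<lambda>n. fst p \<noteq> snd p \<longrightarrow> t n (fst p) \<noteq> t n (snd p)) sequentially"
        proof (cases "fst p = snd p")
          case True thus ?thesis by simp
        next
          case False
          hence ne: "z (fst p) - z (snd p) \<noteq> 0" using zi p by (auto simp: inj_on_def)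
          have "(\<lambda>n. t n (fst p) - t n (snd p)) \<longlonglongrightarrow> z (fst p) - z (snd p)"
            by (intro tendsto_diff tlim)
          from tendsto_imp_eventually_ne[OF this ne]
          show ?thesis by (rule eventually_mono) auto
        qed
      qed
    qed
    have evinj: "eventually (\<lambda>n. inj_on (t n) {..<k}) sequentially"
      using ev by (rule eventually_mono) (auto simp: inj_on_def)
    have psym: "\<forall>i<k. \<forall>j<k. pick_entry F z j i = cnj (pick_entry F z i j)"
      using pick_sym by blast
    have "0 \<le> (\<Sum>i<k. \<Sum>j<k. cnj (c i) * pick_entry F z i j * c j)" for c
    proof -
      have dz: "1 - z i * cnj (z j) \<noteq> 0" if "i < k" "j < k" for i j
      proof
        assume "1 - z i * cnj (z j) = 0"
        hence "z i * cnj (z j) = 1" by (simp add: right_minus_eq)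
        hence n1: "norm (z i) * norm (z j) = 1" by (metis complex_mod_cnj norm_mult norm_one)
        have zl: "norm (z l) < 1" if "l < k" for l
        proof -
          have "z l \<in> D" using that zi by auto
          thus ?thesis using assms(3) by auto
        qed
        have "norm (z i) * norm (z j) < 1 * 1"
          using zl[of i] zl[of j] that by (intro mult_strict_mono) auto
        with n1 show False by simp
      qed
      have lim: "(\<lambda>n. \<Sum>i<k. \<Sum>j<k. cnj (c i) * pick_entry f (t n) i j * c j)
          \<longlonglongrightarrow> (\<Sum>i<k. \<Sum>j<k. cnj (c i) * pick_entry F z i j * c j)"
      proof (intro tendsto_sum)
        fix i j assume ij: "i \<in> {..<k}" "j \<in> {..<k}"
        have "(\<lambda>n. (1 - f (t n i) * cnj (f (t n j))) / (1 - t n i * cnj (t n j)))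
            \<longlonglongrightarrow> (1 - F (z i) * cnj (F (z j))) / (1 - z i * cnj (z j))"
          using ij dz[of i j] by (intro tendsto_divide tendsto_diff tendsto_mult tendsto_cnj tendsto_const tlim flim) auto
        hence "(\<lambda>n. pick_entry f (t n) i j) \<longlonglongrightarrow> pick_entry F z i j"
          by (simp add: pick_entry_def)
        thus "(\<lambda>n. cnj (c i) * pick_entry f (t n) i j * c j) \<longlonglongrightarrow> cnj (c i) * pick_entry F z i j * c j"
          by (intro tendsto_mult_right tendsto_mult_left)
      qed
      have evn: "eventually (\<lambda>n. (\<Sum>i<k. \<Sum>j<k. cnj (c i) * pick_entry f (t n) i j * c j) \<in> {x. 0 \<le> Re x \<and> Im x = 0}) sequentially"
        using evinj
      proof (rule eventually_mono)
        fix n assume "inj_on (t n) {..<k}"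
        hence "psd_matrix k (pick_entry f (t n))" using H timg by blast
        hence "0 \<le> (\<Sum>i<k. \<Sum>j<k. cnj (c i) * pick_entry f (t n) i j * c j)"
          unfolding psd_matrix_def by blast
        thus "(\<Sum>i<k. \<Sum>j<k. cnj (c i) * pick_entry f (t n) i j * c j) \<in> {x. 0 \<le> Re x \<and> Im x = 0}"
          unfolding less_eq_complex_def by simp
      qed
      have cl: "closed {x::complex. 0 \<le> Re x \<and> Im x = 0}"
        by (intro closed_Collect_conj closed_Collect_le closed_Collect_eq continuous_intros)
      have "(\<Sum>i<k. \<Sum>j<k. cnj (c i) * pick_entry F z i j * c j) \<in> {x. 0 \<le> Re x \<and> Im x = 0}"
        using Lim_in_closed_set[OF cl evn _ lim] by simp
      thus ?thesis by (simp add: less_eq_complex_def)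
    qed
    thus ?thesis using psym unfolding psd_matrix_def by blast
  qed
  then obtain S where S: "schur_function S" "\<forall>w\<in>D. S w = F w"
    using assms(4) unfolding hindmarsh_property_def by blast
  show "\<exists>S. schur_function S \<and> (\<forall>w\<in>D - Z. S w = f w)"
    using S by (auto simp: F_def)
qed

end
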